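(* For every tree $T\subseteq\mathbb{N}^{<\mathbb{N}}$, $[\mathcal{JT}^\omega(T)]=\{\mathcal{J}^\omega(Z):Z\in[T]\}$, where $\mathcal{JT}^\omega(T)=\{J^\omega(\sigma):\sigma\in T\}$.
   Context: A tree is a subset of $\mathbb{N}^{<\mathbb{N}}$ closed under initial segments; $[T]$ is its set of infinite paths. Strings are coded by natural numbers via a fixed computable coding with $\sigma\subsetneq\tau$ implying code$(\sigma)<$ code$(\tau)$. For $\sigma$ finite or infinite, $\{e\}^\sigma_t(n)\downarrow$ means the $e$-th machine on input $n$ with oracle $\sigma$ halts in fewer than $\min(|\sigma|,t)$ steps. For $Z\in\mathbb{N}^\mathbb{N}$: $t_{-1}=1$, $t_n=\max\{t_{n-1}+1,\mu t(\{n\}^Z_t(n)\downarrow)\}$ ($t_n=t_{n-1}+1$ if no such $t$), $\mathcal{J}(Z)(n)=Z\restriction t_n$, and $\mathcal{J}^\omega(Z)(n)=\mathcal{J}^{n+1}(Z)(0)$. For finite $\sigma$: $t_{-1}=1$, $t_n=\max\{t_{n-1}+1,\mu t(\{n\}^{\sigma\restriction t}(n)\downarrow)\}$ ($t_n=t_{n-1}+1$ if no such $t$), $J(\sigma)=\langle\sigma\restriction t_0,\dots,\sigma\restriction t_{k-1}\rangle$ with $k$ least such that $t_k>|\sigma|$; $J^m$ is the $m$-fold iterate; $J^\omega(\sigma)=\langle J(\sigma)(0),J^2(\sigma)(0),\dots,J^{n-1}(\sigma)(0)\rangle$ where $n$ is least with $J^n(\sigma)=\emptyset$. *)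

theory Defs
  imports "HOL-Library.Sublist"
begin

text \<open>The machine model is a parameter M: M e f n = Some s means that the e-th
  oracle machine with oracle f on input n halts after exactly s steps
  (None: it does not halt).\<close>

type_synonym model = "nat \<Rightarrow> (nat \<Rightarrow> nat) \<Rightarrow> nat \<Rightarrow> nat option"

definition use_principle :: "model \<Rightarrow> bool" where
  "use_principle M \<longleftrightarrow>
     (\<forall>e f g n s. M e f n = Some s \<longrightarrow> (\<forall>i<s. f i = g i) \<longrightarrow> M e g n = Some s)"

definition good_coding :: "(nat list \<Rightarrow> nat) \<Rightarrow> bool" where
  "good_coding c \<longleftrightarrow> inj c \<and> (\<forall>\<sigma> \<tau>. strict_prefix \<sigma> \<tau> \<longrightarrow> c \<sigma> < c \<tau>)"

definition restr :: "(nat \<Rightarrow> nat) \<Rightarrow> nat \<Rightarrow> nat list" where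
  "restr Z k = map Z [0..<k]"

definition ext :: "nat list \<Rightarrow> nat \<Rightarrow> nat" where
  "ext \<sigma> i = (if i < length \<sigma> then \<sigma> ! i else 0)"

definition is_tree :: "nat list set \<Rightarrow> bool" where
  "is_tree T \<longleftrightarrow> (\<forall>\<sigma>\<in>T. \<forall>\<tau>. prefix \<tau> \<sigma> \<longrightarrow> \<tau> \<in> T)"

definition paths :: "nat list set \<Rightarrow> (nat \<Rightarrow> nat) set" where
  "paths T = {Z. \<forall>k. restr Z k \<in> T}"

text \<open>{e}^Z_t(n) halts (infinite oracle): halts in fewer than t steps.\<close>
definition haltsZ :: "model \<Rightarrow> nat \<Rightarrow> (nat \<Rightarrow> nat) \<Rightarrow> nat \<Rightarrow> nat \<Rightarrow> bool" where
  "haltsZ M e Z t n \<longleftrightarrow> (\<exists>s<t. M e Z n = Some s)"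

text \<open>{e}^sigma(n) halts (finite oracle, no step subscript): halts in fewer than |sigma| steps.\<close>
definition haltsF :: "model \<Rightarrow> nat \<Rightarrow> nat list \<Rightarrow> nat \<Rightarrow> bool" where
  "haltsF M e \<sigma> n \<longleftrightarrow> (\<exists>s<length \<sigma>. M e (ext \<sigma>) n = Some s)"

text \<open>The sequence t_n for infinite Z (t_{-1} = 1).\<close>
definition nextZ :: "model \<Rightarrow> (nat \<Rightarrow> nat) \<Rightarrow> nat \<Rightarrow> nat \<Rightarrow> nat" where
  "nextZ M Z n p = (if \<exists>t. haltsZ M n Z t n
                    then max (Suc p) (LEAST t. haltsZ M n Z t n) else Suc p)"

primrec tZ :: "model \<Rightarrow> (nat \<Rightarrow> nat) \<Rightarrow> nat \<Rightarrow> nat" where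
  "tZ M Z 0 = nextZ M Z 0 1"
| "tZ M Z (Suc m) = nextZ M Z (Suc m) (tZ M Z m)"

definition JJ :: "(nat list \<Rightarrow> nat) \<Rightarrow> model \<Rightarrow> (nat \<Rightarrow> nat) \<Rightarrow> nat \<Rightarrow> nat" where
  "JJ c M Z n = c (restr Z (tZ M Z n))"

definition JJomega :: "(nat list \<Rightarrow> nat) \<Rightarrow> model \<Rightarrow> (nat \<Rightarrow> nat) \<Rightarrow> nat \<Rightarrow> nat" where
  "JJomega c M Z n = ((JJ c M) ^^ (Suc n)) Z 0"

text \<open>The sequence t_n for finite sigma (t_{-1} = 1).\<close>
definition nextF :: "model \<Rightarrow> nat list \<Rightarrow> nat \<Rightarrow> nat \<Rightarrow> nat" where
  "nextF M \<sigma> n p = (if \<exists>t. haltsF M n (take t \<sigma>) n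
                    then max (Suc p) (LEAST t. haltsF M n (take t \<sigma>) n) else Suc p)"

primrec tF :: "model \<Rightarrow> nat list \<Rightarrow> nat \<Rightarrow> nat" where
  "tF M \<sigma> 0 = nextF M \<sigma> 0 1"
| "tF M \<sigma> (Suc m) = nextF M \<sigma> (Suc m) (tF M \<sigma> m)"

definition Jf :: "(nat list \<Rightarrow> nat) \<Rightarrow> model \<Rightarrow> nat list \<Rightarrow> nat list" where
  "Jf c M \<sigma> = (let k = (LEAST k. tF M \<sigma> k > length \<sigma>)
               in map (\<lambda>i. c (take (tF M \<sigma> i) \<sigma>)) [0..<k])"

definition Jfomega :: "(nat list \<Rightarrow> nat) \<Rightarrow> model \<Rightarrow> nat list \<Rightarrow> nat list" where
  "Jfomega c M \<sigma> = (let n = (LEAST n. ((Jf c M) ^^ n) \<sigma> = [])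
                    in map (\<lambda>i. ((Jf c M) ^^ (Suc i)) \<sigma> ! 0) [0..<n - 1])"

definition JTomega :: "(nat list \<Rightarrow> nat) \<Rightarrow> model \<Rightarrow> nat list set \<Rightarrow> nat list set" where
  "JTomega c M T = Jfomega c M ` T"

end

theory Submission
  imports Defs
begin


fun stepv :: "nat option \<Rightarrow> nat \<Rightarrow> nat" where
  "stepv None p = Suc p"
| "stepv (Some s) p = max (Suc p) (Suc s)"

primrec tseq :: "(nat \<Rightarrow> nat option) \<Rightarrow> nat \<Rightarrow> nat" where
  "tseq h 0 = stepv (h 0) 1"
| "tseq h (Suc m) = stepv (h (Suc m)) (tseq h m)"

lemma stepv_ge: "stepv x p \<ge> Suc p" by (cases x) auto
lemma stepv_some: "x = Some s \<Longrightarrow> s < stepv x p" by auto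

lemma tseq_Suc_gt: "tseq h (Suc m) > tseq h m"
  using stepv_ge[where x="h (Suc m)" and p="tseq h m"] by simp

lemma tseq_ge: "tseq h m \<ge> m + 2"
proof (induction m)
  case 0 then show ?case using stepv_ge[where x="h 0" and p=1] by simp
next
  case (Suc m) then show ?case using tseq_Suc_gt[of h m] by simp
qed

lemma tseq_mono: "j \<le> m \<Longrightarrow> tseq h j \<le> tseq h m"
proof (induction m)
  case 0 then show ?case by simp
next
  case (Suc m) then show ?case using tseq_Suc_gt[of h m] by (cases "j = Suc m") auto
qed

lemma tseq_smono: "j < m \<Longrightarrow> tseq h j < tseq h m"
  using tseq_mono[of "Suc j" m h] tseq_Suc_gt[of h j] by simp

lemma tseq_some: "h j = Some s \<Longrightarrow> s < tseq h j"
  by (cases j) auto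

lemma tseq_cong: "(\<And>j. j \<le> m \<Longrightarrow> h j = h' j) \<Longrightarrow> tseq h m = tseq h' m"
  by (induction m) auto

definition hFl :: "model \<Rightarrow> nat list \<Rightarrow> nat \<Rightarrow> nat option" where
  "hFl M \<sigma> n = (case M n (ext \<sigma>) n of Some s \<Rightarrow> if s < length \<sigma> then Some s else None | None \<Rightarrow> None)"

lemma hFl_lt: "hFl M \<sigma> n = Some s \<Longrightarrow> s < length \<sigma>"
  by (auto simp: hFl_def split: option.splits if_splits)

lemma nextZ_eq: "nextZ M Z n p = stepv (M n Z n) p"
proof (cases "M n Z n")
  case None then show ?thesis by (simp add: nextZ_def haltsZ_def)
next
  case (Some s)
  have "(LEAST t. haltsZ M n Z t n) = Suc s"
    by (rule Least_equality) (auto simp: haltsZ_def Some)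
  moreover have "\<exists>t. haltsZ M n Z t n" using Some by (auto simp: haltsZ_def)
  ultimately show ?thesis by (simp add: nextZ_def Some)
qed

lemma ext_take: "i < t \<Longrightarrow> ext (take t \<sigma>) i = ext \<sigma> i"
  by (auto simp: ext_def)

lemma up_use: "use_principle M \<Longrightarrow> M e f n = Some s \<Longrightarrow> (\<And>i. i < s \<Longrightarrow> f i = g i) \<Longrightarrow> M e g n = Some s"
  unfolding use_principle_def by blast

lemma haltsF_iff:
  assumes up: "use_principle M"
  shows "haltsF M n (take t \<sigma>) n \<longleftrightarrow> (\<exists>s. s < t \<and> s < length \<sigma> \<and> M n (ext \<sigma>) n = Some s)"
proof
  assume "haltsF M n (take t \<sigma>) n"
  then obtain s where s: "s < length (take t \<sigma>)" "M n (ext (take t \<sigma>)) n = Some s"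
    by (auto simp: haltsF_def)
  have "M n (ext \<sigma>) n = Some s"
  proof (rule up_use[where M=M, OF up s(2)])
    fix i assume "i < s" then show "ext (take t \<sigma>) i = ext \<sigma> i" using s(1) by (intro ext_take) simp
  qed
  then show "\<exists>s. s < t \<and> s < length \<sigma> \<and> M n (ext \<sigma>) n = Some s" using s(1) by auto
next
  assume "\<exists>s. s < t \<and> s < length \<sigma> \<and> M n (ext \<sigma>) n = Some s"
  then obtain s where s: "s < t" "s < length \<sigma>" "M n (ext \<sigma>) n = Some s" by auto
  have "M n (ext (take t \<sigma>)) n = Some s"
  proof (rule up_use[where M=M, OF up s(3)])
    fix i assume "i < s" then show "ext \<sigma> i = ext (take t \<sigma>) i" using s(1) by (intro ext_take[symmetric]) simp
  qed
  then show "haltsF M n (take t \<sigma>) n" using s by (auto simp: haltsF_def)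
qed

lemma nextF_eq:
  assumes up: "use_principle M"
  shows "nextF M \<sigma> n p = stepv (hFl M \<sigma> n) p"
proof (cases "\<exists>s. s < length \<sigma> \<and> M n (ext \<sigma>) n = Some s")
  case False
  then have "\<not> (\<exists>t. haltsF M n (take t \<sigma>) n)" by (auto simp: haltsF_iff[OF up])
  moreover have "hFl M \<sigma> n = None" using False
    by (auto simp: hFl_def split: option.splits)
  ultimately show ?thesis by (simp add: nextF_def)
next
  case True
  then obtain s where s: "s < length \<sigma>" "M n (ext \<sigma>) n = Some s" by auto
  have "(LEAST t. haltsF M n (take t \<sigma>) n) = Suc s"
    by (rule Least_equality) (auto simp: haltsF_iff[OF up] s)
  moreover have "\<exists>t. haltsF M n (take t \<sigma>) n" using s by (auto simp: haltsF_iff[OF up])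
  moreover have "hFl M \<sigma> n = Some s" using s by (simp add: hFl_def)
  ultimately show ?thesis by (simp add: nextF_def)
qed

lemma tZ_eq: "tZ M Z m = tseq (\<lambda>n. M n Z n) m"
  by (induction m) (auto simp: nextZ_eq)

lemma tF_eq: "use_principle M \<Longrightarrow> tF M \<sigma> m = tseq (hFl M \<sigma>) m"
  by (induction m) (auto simp: nextF_eq)



lemma EQH:
  assumes "\<And>s. h j = Some s \<Longrightarrow> s < P" "\<And>s. h' j = Some s \<Longrightarrow> s < P"
    "\<And>s. s < P \<Longrightarrow> h j = Some s \<longleftrightarrow> h' j = Some s"
  shows "h j = h' j"
  using assms by (cases "h j"; cases "h' j") auto

lemma ext_restr: "i < L \<Longrightarrow> ext (restr Z L) i = Z i"
  by (simp add: ext_def restr_def)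

lemma length_restr[simp]: "length (restr Z L) = L" by (simp add: restr_def)

context
  fixes c :: "nat list \<Rightarrow> nat" and M :: model
  assumes up: "use_principle M" and gc: "good_coding c"
begin

lemma AG:
  assumes ag: "\<forall>i<P. ext \<sigma> i = Z i" and P: "P \<le> length \<sigma>" and s: "s < P"
  shows "hFl M \<sigma> j = Some s \<longleftrightarrow> M j Z j = Some s"
proof -
  have "hFl M \<sigma> j = Some s \<longleftrightarrow> M j (ext \<sigma>) j = Some s"
    using P s by (auto simp: hFl_def split: option.splits if_splits)
  also have "\<dots> \<longleftrightarrow> M j Z j = Some s"
  proof
    assume h: "M j (ext \<sigma>) j = Some s"
    show "M j Z j = Some s"
    proof (rule up_use[where M=M, OF up h])
      fix i assume "i < s" then show "ext \<sigma> i = Z i" using ag s by auto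
    qed
  next
    assume h: "M j Z j = Some s"
    show "M j (ext \<sigma>) j = Some s"
    proof (rule up_use[where M=M, OF up h])
      fix i assume "i < s" then show "Z i = ext \<sigma> i" using ag s by auto
    qed
  qed
  finally show ?thesis .
qed

lemma CMP:
  assumes ag: "\<forall>i<P. ext \<sigma> i = Z i" and P: "P \<le> length \<sigma>"
    and t1: "tF M \<sigma> m \<le> P" and t2: "tZ M Z m \<le> P"
  shows "tF M \<sigma> m = tZ M Z m"
  unfolding tF_eq[OF up] tZ_eq
proof (rule tseq_cong)
  fix j assume j: "j \<le> m"
  show "hFl M \<sigma> j = M j Z j"
  proof (rule EQH)
    fix s assume "hFl M \<sigma> j = Some s"
    then have "s < tseq (hFl M \<sigma>) j" by (rule tseq_some)
    also have "\<dots> \<le> tseq (hFl M \<sigma>) m" using j by (rule tseq_mono)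
    finally show "s < P" using t1 unfolding tF_eq[OF up] by simp
  next
    fix s assume "M j Z j = Some s"
    then have "s < tseq (\<lambda>n. M n Z n) j" by (intro tseq_some) simp
    also have "\<dots> \<le> tseq (\<lambda>n. M n Z n) m" using j by (rule tseq_mono)
    finally show "s < P" using t2 unfolding tZ_eq by simp
  next
    fix s assume "s < P" then show "hFl M \<sigma> j = Some s \<longleftrightarrow> M j Z j = Some s"
      using AG[OF ag P] by blast
  qed
qed

lemma CMP2:
  assumes ag: "\<forall>i<length \<sigma>. ext \<sigma> i = Z i" and t2: "tZ M Z m \<le> length \<sigma>"
  shows "tF M \<sigma> m = tZ M Z m"
  unfolding tF_eq[OF up] tZ_eq
proof (rule tseq_cong)
  fix j assume j: "j \<le> m"
  show "hFl M \<sigma> j = M j Z j"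
  proof (rule EQH)
    fix s assume "hFl M \<sigma> j = Some s"
    then show "s < length \<sigma>" by (rule hFl_lt)
  next
    fix s assume "M j Z j = Some s"
    then have "s < tseq (\<lambda>n. M n Z n) j" by (intro tseq_some) simp
    also have "\<dots> \<le> tseq (\<lambda>n. M n Z n) m" using j by (rule tseq_mono)
    finally show "s < length \<sigma>" using t2 unfolding tZ_eq by simp
  next
    fix s assume "s < length \<sigma>" then show "hFl M \<sigma> j = Some s \<longleftrightarrow> M j Z j = Some s"
      using AG[OF ag] by blast
  qed
qed

definition lenJ :: "nat list \<Rightarrow> nat" where
  "lenJ \<sigma> = (LEAST k. tF M \<sigma> k > length \<sigma>)"

lemma tF_ge: "tF M \<sigma> m \<ge> m + 2"
  unfolding tF_eq[OF up] by (rule tseq_ge)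

lemma tF_smono: "j < m \<Longrightarrow> tF M \<sigma> j < tF M \<sigma> m"
  unfolding tF_eq[OF up] by (rule tseq_smono)

lemma tZ_smono: "j < m \<Longrightarrow> tZ M Z j < tZ M Z m"
  unfolding tZ_eq by (rule tseq_smono)

lemma tZ_ge: "tZ M Z m \<ge> m + 2"
  unfolding tZ_eq by (rule tseq_ge)

lemma lenJ_ex: "tF M \<sigma> (lenJ \<sigma>) > length \<sigma>"
  unfolding lenJ_def by (rule LeastI[of _ "length \<sigma>"]) (use tF_ge[of "length \<sigma>" \<sigma>] in simp)

lemma lenJ_le: "j < lenJ \<sigma> \<Longrightarrow> tF M \<sigma> j \<le> length \<sigma>"
  unfolding lenJ_def using not_less_Least by (metis not_le)

lemma Jf_len: "length (Jf c M \<sigma>) = lenJ \<sigma>"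
  by (simp add: Jf_def lenJ_def Let_def)

lemma Jf_nth: "j < length (Jf c M \<sigma>) \<Longrightarrow> Jf c M \<sigma> ! j = c (take (tF M \<sigma> j) \<sigma>)"
  by (simp add: Jf_def Let_def)

lemma Jf_le: "j < length (Jf c M \<sigma>) \<Longrightarrow> tF M \<sigma> j \<le> length \<sigma>"
  using lenJ_le Jf_len by simp

lemma Jf_shorter: "\<sigma> \<noteq> [] \<Longrightarrow> length (Jf c M \<sigma>) < length \<sigma>"
proof -
  assume "\<sigma> \<noteq> []"
  have "tF M \<sigma> (length \<sigma> - 1) > length \<sigma>" using tF_ge[of "length \<sigma> - 1" \<sigma>] \<open>\<sigma> \<noteq> []\<close>
    by (cases \<sigma>) auto
  then have "lenJ \<sigma> \<le> length \<sigma> - 1" unfolding lenJ_def by (rule Least_le)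
  then show ?thesis using \<open>\<sigma> \<noteq> []\<close> Jf_len by (cases \<sigma>) auto
qed

lemma Jf_Nil: "Jf c M [] = []"
proof -
  have "lenJ [] \<le> 0" unfolding lenJ_def by (rule Least_le) (use tF_ge[of 0 "[]"] in simp)
  then show ?thesis using Jf_len[of "[]"] by simp
qed

lemma Jf_short: "length \<sigma> \<le> 1 \<Longrightarrow> Jf c M \<sigma> = []"
proof -
  assume "length \<sigma> \<le> 1"
  have "lenJ \<sigma> \<le> 0" unfolding lenJ_def by (rule Least_le) (use tF_ge[of 0 \<sigma>] \<open>length \<sigma> \<le> 1\<close> in simp)
  then show ?thesis using Jf_len[of \<sigma>] by simp
qed

lemma LP:
  assumes "j < length (Jf c M a)" "j < length (Jf c M b)" "Jf c M a ! j = Jf c M b ! j"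
  shows "tF M a j = tF M b j \<and> take (tF M a j) a = take (tF M b j) b"
proof -
  have "take (tF M a j) a = take (tF M b j) b"
    using assms Jf_nth gc unfolding good_coding_def by (metis injD)
  moreover have "length (take (tF M a j) a) = tF M a j" "length (take (tF M b j) b) = tF M b j"
    using Jf_le assms by auto
  ultimately show ?thesis by metis
qed

definition ell :: "(nat \<Rightarrow> nat) \<Rightarrow> nat \<Rightarrow> nat" where
  "ell Z n = (if n = 0 then 1 else tZ M Z (n - 1))"

lemma ell_ge: "ell Z n \<ge> n"
  using tZ_ge[where Z=Z and m="n - 1"] by (auto simp: ell_def)

lemma JfZ: "Jf c M (restr Z (ell Z n)) = restr (JJ c M Z) n"
proof -
  define \<sigma> where "\<sigma> = restr Z (ell Z n)"
  have ag: "\<forall>i<ell Z n. ext \<sigma> i = Z i" by (simp add: \<sigma>_def ext_restr)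
  have tZle: "tZ M Z j \<le> ell Z n" if "j < n" for j
  proof -
    have "j < n - 1 \<or> j = n - 1" using that by arith
    then show ?thesis using that tZ_smono[of j "n - 1" Z] by (auto simp: ell_def)
  qed
  have eq: "tF M \<sigma> j = tZ M Z j" if "j < n" for j
    by (rule CMP2) (use tZle[OF that] ag in \<open>auto simp: \<sigma>_def\<close>)
  have gt: "tF M \<sigma> n > ell Z n"
  proof (cases n)
    case 0 then show ?thesis using tF_ge[of 0 \<sigma>] by (simp add: ell_def)
  next
    case (Suc k)
    then have "tF M \<sigma> k = tZ M Z k" using eq by simp
    then show ?thesis using tF_smono[of k n \<sigma>] Suc by (simp add: ell_def)
  qed
  have len: "lenJ \<sigma> = n" unfolding lenJ_def
  proof (rule Least_equality)
    show "length \<sigma> < tF M \<sigma> n" using gt by (simp add: \<sigma>_def)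
  next
    fix k assume "length \<sigma> < tF M \<sigma> k"
    then show "n \<le> k" using eq tZle by (simp add: \<sigma>_def) (metis leD not_le_imp_less)
  qed
  show ?thesis
  proof (rule nth_equalityI)
    show "length (Jf c M (restr Z (ell Z n))) = length (restr (JJ c M Z) n)"
      using len Jf_len by (simp add: \<sigma>_def)
  next
    fix i assume "i < length (Jf c M (restr Z (ell Z n)))"
    then have i: "i < n" using len Jf_len by (simp add: \<sigma>_def)
    then have "Jf c M \<sigma> ! i = c (take (tZ M Z i) \<sigma>)" using Jf_nth len Jf_len eq by simp
    also have "take (tZ M Z i) \<sigma> = restr Z (tZ M Z i)" using tZle[OF i]
      by (simp add: \<sigma>_def restr_def take_map min_def)
    finally show "Jf c M (restr Z (ell Z n)) ! i = restr (JJ c M Z) n ! i"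
      using i by (simp add: \<sigma>_def JJ_def restr_def)
  qed
qed
end


context
  fixes c :: "nat list \<Rightarrow> nat" and M :: model
  assumes up: "use_principle M" and gc: "good_coding c"
begin

lemma iterL: "\<exists>L\<ge>n. (\<forall>j\<le>i. \<exists>n'\<ge>n. (Jf c M ^^ j) (restr Z L) = restr ((JJ c M ^^ j) Z) n')
   \<and> (Jf c M ^^ i) (restr Z L) = restr ((JJ c M ^^ i) Z) n"
proof (induction i arbitrary: Z n)
  case 0 then show ?case by auto
next
  case (Suc i)
  from Suc.IH[where Z="JJ c M Z" and n=n] obtain L' where L': "L' \<ge> n"
    "\<forall>j\<le>i. \<exists>n'\<ge>n. (Jf c M ^^ j) (restr (JJ c M Z) L') = restr ((JJ c M ^^ j) (JJ c M Z)) n'"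
    "(Jf c M ^^ i) (restr (JJ c M Z) L') = restr ((JJ c M ^^ i) (JJ c M Z)) n" by blast
  define L where "L = ell M Z L'"
  have JL: "Jf c M (restr Z L) = restr (JJ c M Z) L'"
    unfolding L_def by (rule JfZ[OF up gc])
  have Lge: "L \<ge> n" using ell_ge[OF up gc, of L' Z] L'(1) by (simp add: L_def)
  have "\<forall>j\<le>Suc i. \<exists>n'\<ge>n. (Jf c M ^^ j) (restr Z L) = restr ((JJ c M ^^ j) Z) n'"
  proof (intro allI impI)
    fix j assume j: "j \<le> Suc i"
    show "\<exists>n'\<ge>n. (Jf c M ^^ j) (restr Z L) = restr ((JJ c M ^^ j) Z) n'"
    proof (cases j)
      case 0 then show ?thesis using Lge by auto
    next
      case (Suc j')
      then show ?thesis using L'(2) j JL by (simp add: funpow_Suc_right del: funpow.simps)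
    qed
  qed
  moreover have "(Jf c M ^^ Suc i) (restr Z L) = restr ((JJ c M ^^ Suc i) Z) n"
    using L'(3) JL by (simp add: funpow_Suc_right del: funpow.simps)
  ultimately show ?case using Lge by blast
qed

lemma sup_dir:
  assumes tree: "is_tree T" and Z: "Z \<in> paths T"
  shows "JJomega c M Z \<in> paths (JTomega c M T)"
  unfolding paths_def
proof (intro CollectI allI)
  fix k
  from iterL[where n=1 and i=k and Z=Z] obtain L where L:
    "\<forall>j\<le>k. \<exists>n'\<ge>1. (Jf c M ^^ j) (restr Z L) = restr ((JJ c M ^^ j) Z) n'"
    "(Jf c M ^^ k) (restr Z L) = restr ((JJ c M ^^ k) Z) 1" by blast
  define \<sigma> where "\<sigma> = restr Z L"
  have \<sigma>T: "\<sigma> \<in> T" using Z by (simp add: paths_def \<sigma>_def)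
  have ne: "(Jf c M ^^ j) \<sigma> \<noteq> []" if "j \<le> k" for j
    using L(1) that by (auto simp: \<sigma>_def restr_def)
  have nil: "(Jf c M ^^ Suc k) \<sigma> = []"
    using L(2) by (simp add: \<sigma>_def Jf_short[OF up gc])
  have least: "(LEAST n. (Jf c M ^^ n) \<sigma> = []) = Suc k"
  proof (rule Least_equality)
    show "(Jf c M ^^ Suc k) \<sigma> = []" by (rule nil)
  next
    fix y assume "(Jf c M ^^ y) \<sigma> = []" then show "Suc k \<le> y" using ne by (meson not_less_eq_eq)
  qed
  have "Jfomega c M \<sigma> = restr (JJomega c M Z) k"
  proof -
    have "Jfomega c M \<sigma> = map (\<lambda>i. (Jf c M ^^ Suc i) \<sigma> ! 0) [0..<k]"
      by (simp add: Jfomega_def least)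
    also have "\<dots> = map (JJomega c M Z) [0..<k]"
    proof (rule map_cong[OF refl])
      fix i assume "i \<in> set [0..<k]"
      then have "Suc i \<le> k" by simp
      then obtain n' where "n' \<ge> 1" "(Jf c M ^^ Suc i) \<sigma> = restr ((JJ c M ^^ Suc i) Z) n'"
        using L(1) by (auto simp: \<sigma>_def)
      then show "(Jf c M ^^ Suc i) \<sigma> ! 0 = JJomega c M Z i"
        by (simp add: JJomega_def restr_def)
    qed
    finally show ?thesis by (simp add: restr_def)
  qed
  then show "restr (JJomega c M Z) k \<in> JTomega c M T"
    using \<sigma>T unfolding JTomega_def by (metis image_eqI)
qed

end


context
  fixes c :: "nat list \<Rightarrow> nat" and M :: model and X :: "nat \<Rightarrow> nat" and s :: "nat \<Rightarrow> nat list"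
  assumes up: "use_principle M" and gc: "good_coding c"
    and hs: "\<And>k i. i \<le> Suc k \<Longrightarrow> (Jf c M ^^ i) (s k) \<noteq> []"
    and hX: "\<And>k i. i \<le> k \<Longrightarrow> X i = Jf c M ((Jf c M ^^ i) (s k)) ! 0"
begin

lemma restr_take: "a \<le> b \<Longrightarrow> take a (restr Z b) = restr Z a"
  by (simp add: restr_def take_map)

definition A :: "nat \<Rightarrow> nat \<Rightarrow> nat list" where "A i k = (Jf c M ^^ i) (s k)"

lemma A_Suc: "A (Suc i) k = Jf c M (A i k)" by (simp add: A_def)

lemma STAB: "\<exists>K. \<forall>k\<ge>K. \<forall>k'\<ge>K. m < length (A i k) \<and> take (Suc m) (A i k) = take (Suc m) (A i k')"
proof (induction m arbitrary: i)
  case 0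
  show ?case
  proof (intro exI allI impI)
    fix k k' assume k: "i \<le> k" and k': "i \<le> k'"
    have l1: "0 < length (Jf c M (A i k))" using hs[of "Suc i" k] k by (simp add: A_def)
    have l2: "0 < length (Jf c M (A i k'))" using hs[of "Suc i" k'] k' by (simp add: A_def)
    have e: "Jf c M (A i k) ! 0 = Jf c M (A i k') ! 0" using hX[OF k] hX[OF k'] by (simp add: A_def)
    from LP[OF up gc l1 l2 e] have eq: "tF M (A i k) 0 = tF M (A i k') 0"
      "take (tF M (A i k) 0) (A i k) = take (tF M (A i k') 0) (A i k')" by auto
    have ge: "tF M (A i k) 0 \<ge> 2" using tF_ge[OF up gc, of 0 "A i k"] by simp
    have le: "tF M (A i k) 0 \<le> length (A i k)" using Jf_le[OF up gc l1] .
    define t where "t = tF M (A i k) 0"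
    have t': "tF M (A i k') 0 = t" using eq(1) by (simp add: t_def)
    have tk: "take t (A i k) = take t (A i k')" using eq(2) t' by (simp add: t_def)
    have t1: "1 \<le> t" using ge by (simp add: t_def)
    have "take 1 (A i k) = take 1 (take t (A i k))" using t1 by simp
    also have "\<dots> = take 1 (A i k')" using tk t1 by simp
    finally have "take (Suc 0) (A i k) = take (Suc 0) (A i k')" by simp
    moreover have "0 < length (A i k)" using ge le by linarith
    ultimately show "0 < length (A i k) \<and> take (Suc 0) (A i k) = take (Suc 0) (A i k')" by simp
  qed
next
  case (Suc m)
  from Suc.IH[of "Suc i"] obtain K where K:
    "\<forall>k\<ge>K. \<forall>k'\<ge>K. m < length (A (Suc i) k) \<and> take (Suc m) (A (Suc i) k) = take (Suc m) (A (Suc i) k')"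
    by blast
  show ?case
  proof (intro exI allI impI)
    fix k k' assume k: "K \<le> k" and k': "K \<le> k'"
    have l1: "m < length (Jf c M (A i k))" using K[rule_format, OF k k] by (simp add: A_Suc)
    have l2: "m < length (Jf c M (A i k'))" using K[rule_format, OF k' k'] by (simp add: A_Suc)
    have "take (Suc m) (Jf c M (A i k)) = take (Suc m) (Jf c M (A i k'))" using K[rule_format, OF k k'] by (simp add: A_Suc)
    then have e: "Jf c M (A i k) ! m = Jf c M (A i k') ! m"
      by (metis lessI nth_take)
    from LP[OF up gc l1 l2 e] have eq: "tF M (A i k) m = tF M (A i k') m"
      "take (tF M (A i k) m) (A i k) = take (tF M (A i k') m) (A i k')" by auto
    have ge: "tF M (A i k) m \<ge> m + 2" using tF_ge[OF up gc, of m "A i k"] by simp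
    have le: "tF M (A i k) m \<le> length (A i k)" using Jf_le[OF up gc l1] .
    define t where "t = tF M (A i k) m"
    have t': "tF M (A i k') m = t" using eq(1) by (simp add: t_def)
    have tk: "take t (A i k) = take t (A i k')" using eq(2) t' by (simp add: t_def)
    have t1: "Suc (Suc m) \<le> t" using ge by (simp add: t_def)
    have "take (Suc (Suc m)) (A i k) = take (Suc (Suc m)) (take t (A i k))" using t1 by (simp add: min_def)
    also have "\<dots> = take (Suc (Suc m)) (A i k')" using tk t1 by (simp add: min_def)
    finally have "take (Suc (Suc m)) (A i k) = take (Suc (Suc m)) (A i k')" .
    moreover have "Suc m < length (A i k)" using ge le by linarith
    ultimately show "Suc m < length (A i k) \<and> take (Suc (Suc m)) (A i k) = take (Suc (Suc m)) (A i k')" by simp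
  qed
qed

definition Kf :: "nat \<Rightarrow> nat \<Rightarrow> nat" where
  "Kf m i = (SOME K. \<forall>k\<ge>K. \<forall>k'\<ge>K. m < length (A i k) \<and> take (Suc m) (A i k) = take (Suc m) (A i k'))"

lemma Kf: "Kf m i \<le> k \<Longrightarrow> Kf m i \<le> k' \<Longrightarrow> m < length (A i k) \<and> take (Suc m) (A i k) = take (Suc m) (A i k')"
  using someI_ex[OF STAB[of m i]] unfolding Kf_def by blast

definition B :: "nat \<Rightarrow> nat \<Rightarrow> nat" where "B i j = A i (Kf j i) ! j"

lemma PRE: assumes "Kf m i \<le> k" shows "m < length (A i k) \<and> (\<forall>j\<le>m. A i k ! j = B i j)"
proof -
  have "m < length (A i k)" using Kf[OF assms assms] by simp
  moreover have "A i k ! j = B i j" if j: "j \<le> m" for j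
  proof -
    define k2 where "k2 = max k (Kf j i)"
    have "take (Suc m) (A i k) = take (Suc m) (A i k2)" using Kf[of m i k k2] assms by (simp add: k2_def)
    then have 1: "A i k ! j = A i k2 ! j" using j by (metis le_imp_less_Suc nth_take)
    have "take (Suc j) (A i k2) = take (Suc j) (A i (Kf j i))" using Kf[of j i k2 "Kf j i"] by (simp add: k2_def)
    then have 2: "A i k2 ! j = A i (Kf j i) ! j" by (metis lessI nth_take)
    show ?thesis using 1 2 by (simp add: B_def)
  qed
  ultimately show ?thesis by blast
qed

lemma PRE2: "\<exists>K. \<forall>k\<ge>K. L \<le> length (A i k) \<and> take L (A i k) = restr (B i) L"
proof (cases L)
  case 0 then show ?thesis by (simp add: restr_def)
next
  case (Suc m)
  show ?thesis
  proof (intro exI allI impI)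
    fix k assume k: "Kf m i \<le> k"
    from PRE[OF k] have p: "m < length (A i k)" "\<forall>j\<le>m. A i k ! j = B i j" by auto
    have "take L (A i k) = restr (B i) L"
      by (rule nth_equalityI) (use p Suc in \<open>auto simp: restr_def simp del: upt_Suc\<close>)
    then show "L \<le> length (A i k) \<and> take L (A i k) = restr (B i) L" using p Suc by simp
  qed
qed

lemma CONV: "B (Suc i) m = JJ c M (B i) m"
proof -
  define K0 where "K0 = Kf m (Suc i)"
  have h0: "m < length (Jf c M (A i k)) \<and> Jf c M (A i k) ! m = B (Suc i) m" if "K0 \<le> k" for k
    using PRE[of m "Suc i" k] that by (simp add: K0_def A_Suc)
  define \<tau> where "\<tau> = tF M (A i K0) m"
  have h1: "tF M (A i k) m = \<tau> \<and> take \<tau> (A i k) = take \<tau> (A i K0)" if "K0 \<le> k" for k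
  proof -
    have "tF M (A i k) m = tF M (A i K0) m \<and> take (tF M (A i k) m) (A i k) = take (tF M (A i K0) m) (A i K0)"
      by (rule LP[OF up gc]) (use h0[OF that] h0[of K0] in auto)
    then show ?thesis unfolding \<tau>_def by metis
  qed
  define P where "P = max \<tau> (tZ M (B i) m)"
  obtain K1 where K1: "\<forall>k\<ge>K1. P \<le> length (A i k) \<and> take P (A i k) = restr (B i) P"
    using PRE2 by blast
  define k where "k = max K0 K1"
  have Pk: "P \<le> length (A i k)" "take P (A i k) = restr (B i) P" using K1 by (auto simp: k_def)
  have ag: "\<forall>j<P. ext (A i k) j = B i j"
  proof (intro allI impI)
    fix j assume j: "j < P"
    have "A i k ! j = take P (A i k) ! j" using j by simp
    also have "\<dots> = B i j" using Pk(2) j by (simp add: restr_def)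
    finally show "ext (A i k) j = B i j" using j Pk(1) by (simp add: ext_def)
  qed
  have tk: "tF M (A i k) m = \<tau>" using h1[of k] by (simp add: k_def)
  have eqt: "tF M (A i k) m = tZ M (B i) m"
    by (rule CMP[OF up gc ag Pk(1)]) (use tk in \<open>auto simp: P_def\<close>)
  have "B (Suc i) m = c (take \<tau> (A i k))"
    using h0[of k] Jf_nth[OF up gc, of m "A i k"] tk by (simp add: k_def)
  also have "take \<tau> (A i k) = take \<tau> (take P (A i k))"
    by (simp add: P_def min_def)
  also have "\<dots> = take \<tau> (restr (B i) P)" using Pk(2) by simp
  also have "\<dots> = restr (B i) \<tau>" by (rule restr_take) (simp add: P_def)
  finally show ?thesis using tk eqt by (simp add: JJ_def)
qed

lemma B_iter: "B i = (JJ c M ^^ i) (B 0)"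
proof (induction i)
  case 0 then show ?case by simp
next
  case (Suc i)
  have "B (Suc i) = JJ c M (B i)" using CONV by (intro ext) simp
  then show ?case using Suc by simp
qed

lemma X_eq: "X = JJomega c M (B 0)"
proof
  fix i
  define k where "k = max i (Kf 0 (Suc i))"
  have "X i = A (Suc i) k ! 0" using hX[of i k] by (simp add: k_def A_Suc[symmetric]) (simp add: A_def)
  also have "\<dots> = B (Suc i) 0" using PRE[of 0 "Suc i" k] by (simp add: k_def)
  also have "\<dots> = JJomega c M (B 0) i" using B_iter[of "Suc i"] by (simp add: JJomega_def)
  finally show "X i = JJomega c M (B 0) i" .
qed

lemma B0_path: assumes tree: "is_tree T" and sT: "\<And>k. s k \<in> T" shows "B 0 \<in> paths T"
  unfolding paths_def
proof (intro CollectI allI)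
  fix L
  obtain K where "\<forall>k\<ge>K. L \<le> length (A 0 k) \<and> take L (A 0 k) = restr (B 0) L" using PRE2 by blast
  then have "take L (s K) = restr (B 0) L" by (simp add: A_def)
  moreover have "take L (s K) \<in> T" using tree sT[of K] unfolding is_tree_def
    by (meson take_is_prefix)
  ultimately show "restr (B 0) L \<in> T" by simp
qed

end


context
  fixes c :: "nat list \<Rightarrow> nat" and M :: model
  assumes up: "use_principle M" and gc: "good_coding c"
begin

lemma len_iter: "length ((Jf c M ^^ n) \<sigma>) \<le> length \<sigma> - n"
proof (induction n)
  case 0 then show ?case by simp
next
  case (Suc n)
  show ?case
  proof (cases "(Jf c M ^^ n) \<sigma> = []")
    case True then show ?thesis by (simp add: Jf_Nil[OF up gc])
  next
    case False
    then show ?thesis using Jf_shorter[OF up gc False] Suc by simp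
  qed
qed

lemma JO:
  assumes h: "Jfomega c M \<sigma> = restr X (Suc k)"
  shows "(\<forall>i\<le>Suc k. (Jf c M ^^ i) \<sigma> \<noteq> []) \<and> (\<forall>i\<le>k. X i = Jf c M ((Jf c M ^^ i) \<sigma>) ! 0)"
proof -
  define N where "N = (LEAST n. (Jf c M ^^ n) \<sigma> = [])"
  have ex: "(Jf c M ^^ length \<sigma>) \<sigma> = []" using len_iter[of "length \<sigma>" \<sigma>] by simp
  have J: "Jfomega c M \<sigma> = map (\<lambda>i. (Jf c M ^^ Suc i) \<sigma> ! 0) [0..<N - 1]"
    by (simp add: Jfomega_def N_def)
  have "N - 1 = Suc k" using arg_cong[OF h, of length] J by simp
  then have N: "N = Suc (Suc k)" by simp
  have ne: "(Jf c M ^^ i) \<sigma> \<noteq> []" if "i \<le> Suc k" for i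
    using not_less_Least[of i "\<lambda>n. (Jf c M ^^ n) \<sigma> = []"] that N unfolding N_def by simp
  have "X i = Jf c M ((Jf c M ^^ i) \<sigma>) ! 0" if "i \<le> k" for i
  proof -
    have "X i = restr X (Suc k) ! i" using that by (simp add: restr_def del: upt_Suc)
    also have "\<dots> = Jfomega c M \<sigma> ! i" using h by simp
    also have "\<dots> = (Jf c M ^^ Suc i) \<sigma> ! 0" using J N that by (simp del: upt_Suc)
    finally show ?thesis by simp
  qed
  then show ?thesis using ne by blast
qed

end

theorem lemma5p14:
  fixes c :: "nat list \<Rightarrow> nat" and M :: model and T :: "nat list set"
  assumes "good_coding c" and "use_principle M" and "is_tree T"
  shows "paths (JTomega c M T) = JJomega c M ` paths T"
proof
  show "JJomega c M ` paths T \<subseteq> paths (JTomega c M T)"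
    using sup_dir[OF assms(2,1,3)] by blast
next
  show "paths (JTomega c M T) \<subseteq> JJomega c M ` paths T"
  proof
    fix X assume X: "X \<in> paths (JTomega c M T)"
    have "\<forall>k. \<exists>\<sigma>. \<sigma> \<in> T \<and> Jfomega c M \<sigma> = restr X (Suc k)"
    proof
      fix k
      have "restr X (Suc k) \<in> Jfomega c M ` T" using X by (simp add: paths_def JTomega_def)
      then show "\<exists>\<sigma>. \<sigma> \<in> T \<and> Jfomega c M \<sigma> = restr X (Suc k)" by (metis imageE)
    qed
    then obtain s where s: "\<And>k. s k \<in> T" "\<And>k. Jfomega c M (s k) = restr X (Suc k)"
      by metis
    have hs: "\<And>k i. i \<le> Suc k \<Longrightarrow> (Jf c M ^^ i) (s k) \<noteq> []"
      using JO[OF assms(2,1) s(2)] by blast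
    have hX: "\<And>k i. i \<le> k \<Longrightarrow> X i = Jf c M ((Jf c M ^^ i) (s k)) ! 0"
      using JO[OF assms(2,1) s(2)] by blast
    have "X = JJomega c M (B c M s 0)" by (rule X_eq[OF assms(2,1) hs hX])
    moreover have "B c M s 0 \<in> paths T" by (rule B0_path[OF assms(2,1) hs hX assms(3) s(1)])
    ultimately show "X \<in> JJomega c M ` paths T" by blast
  qed
qed


end
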